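(* Let $\mathbb F_q$ be a finite field and let $B \subseteq \mathbb F_q^m$ be $C$-weakly Sidorenko, with $r := \mathrm{rank}_{\mathrm{aff}}(B) \geq 1$. Then for every $n$, \[\mathrm{ex}_{\mathrm{aff}}(n,B) < q^{\,n - (n-r+1)/(C-r+1)}.\] Moreover, if $A \subseteq \mathbb F_q^n$ with $|A| = D q^{(1 - 1/(C-r+1))n}$ for some $D > 0$, then $A$ contains more than \[\left(1 - \frac{q^{r-1}}{D^{C-r+1}}\right)\frac{\alpha^C N^r}{|\mathrm{Aut}_{\mathrm{aff}}(B)|}\] subsets affinely isomorphic to $B$, where $N = q^n$ and $|A| = \alpha N$.
   Context: An affine relation on $x_1,\ldots,x_k$ is an equation $\sum_i \lambda_i x_i = 0$ with $\lambda_i \in \mathbb F_q$, $\sum_i \lambda_i = 0$; a set is affinely independent if it has no such relation with some $\lambda_i \ne 0$, and $\mathrm{rank}_{\mathrm{aff}}(B)$ is the size of a maximal affinely independent subset of $B$. For $B \subseteq \mathbb F_q^m$, $A \subseteq \mathbb F_q^n$, an affine homomorphism $B \to A$ is a map extending to an affine map $\mathbb F_q^m \to \mathbb F_q^n$; $\mathrm{hom}_{\mathrm{aff}}(B,A)$ is the number of them. An affine isomorphism is a bijective affine homomorphism whose inverse is an affine homomorphism; $\mathrm{Aut}_{\mathrm{aff}}(B)$ is the set of affine isomorphisms $B \to B$. A subset $B' \subseteq A$ is affinely isomorphic to $B$ if there is an affine isomorphism $B \to B'$; $A$ contains an affine copy of $B$ if it has such a subset. $\mathrm{ex}_{\mathrm{aff}}(n,B)$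 is the maximum size of a subset of $\mathbb F_q^n$ containing no affine copy of $B$. $B$ is $C$-weakly Sidorenko if for every $n$ and every $A \subseteq \mathbb F_q^n$ with $|A| = \alpha q^n$, $\mathrm{hom}_{\mathrm{aff}}(B,A) \geq \alpha^C (q^n)^{\mathrm{rank}_{\mathrm{aff}}(B)}$. *)

theory Defs
  imports Complex_Main "HOL-Library.FuncSet"
begin

text \<open>The vector space F_q^n is represented as the set of functions
  nat => 'a vanishing outside {..<n}.\<close>

definition vecs :: "nat \<Rightarrow> (nat \<Rightarrow> 'a::field) set" where
  "vecs n = {v. \<forall>i\<ge>n. v i = 0}"

definition affine_map :: "nat \<Rightarrow> nat \<Rightarrow> ((nat \<Rightarrow> 'a::field) \<Rightarrow> (nat \<Rightarrow> 'a)) \<Rightarrow> bool" where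
  "affine_map m n f \<longleftrightarrow>
     (\<exists>(M :: nat \<Rightarrow> nat \<Rightarrow> 'a) (b :: nat \<Rightarrow> 'a). b \<in> vecs n \<and>
        (\<forall>x\<in>vecs m. f x = (\<lambda>i. if i < n then b i + (\<Sum>j<m. M i j * x j) else 0)))"

definition aff_ext :: "nat \<Rightarrow> nat \<Rightarrow> (nat \<Rightarrow> 'a::field) set \<Rightarrow> ((nat \<Rightarrow> 'a) \<Rightarrow> (nat \<Rightarrow> 'a)) \<Rightarrow> bool" where
  "aff_ext m n B g \<longleftrightarrow> (\<exists>f. affine_map m n f \<and> (\<forall>x\<in>B. g x = f x))"

definition aff_indep :: "(nat \<Rightarrow> 'a::field) set \<Rightarrow> bool" where
  "aff_indep S \<longleftrightarrow>
     (\<forall>c :: (nat \<Rightarrow> 'a) \<Rightarrow> 'a. (\<Sum>x\<in>S. c x) = 0 \<and> (\<forall>i. (\<Sum>x\<in>S. c x * x i) = 0)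
        \<longrightarrow> (\<forall>x\<in>S. c x = 0))"

definition rank_aff :: "(nat \<Rightarrow> 'a::field) set \<Rightarrow> nat" where
  "rank_aff B = Max {card S | S. S \<subseteq> B \<and> aff_indep S}"

definition hom_aff :: "nat \<Rightarrow> nat \<Rightarrow> (nat \<Rightarrow> 'a::field) set \<Rightarrow> (nat \<Rightarrow> 'a) set \<Rightarrow> nat" where
  "hom_aff m n B A = card {g \<in> B \<rightarrow>\<^sub>E A. aff_ext m n B g}"

definition aff_iso :: "nat \<Rightarrow> nat \<Rightarrow> (nat \<Rightarrow> 'a::field) set \<Rightarrow> (nat \<Rightarrow> 'a) set \<Rightarrow> ((nat \<Rightarrow> 'a) \<Rightarrow> (nat \<Rightarrow> 'a)) \<Rightarrow> bool" where
  "aff_iso m n B B' \<phi> \<longleftrightarrow> bij_betw \<phi> B B' \<and> aff_ext m n B \<phi> \<and>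
      aff_ext n m B' (the_inv_into B \<phi>)"

definition aff_isomorphic :: "nat \<Rightarrow> nat \<Rightarrow> (nat \<Rightarrow> 'a::field) set \<Rightarrow> (nat \<Rightarrow> 'a) set \<Rightarrow> bool" where
  "aff_isomorphic m n B B' \<longleftrightarrow> (\<exists>\<phi>. aff_iso m n B B' \<phi>)"

definition Aut_aff :: "nat \<Rightarrow> (nat \<Rightarrow> 'a::field) set \<Rightarrow> ((nat \<Rightarrow> 'a) \<Rightarrow> (nat \<Rightarrow> 'a)) set" where
  "Aut_aff m B = {\<phi> \<in> extensional B. aff_iso m m B B \<phi>}"

definition contains_aff_copy :: "nat \<Rightarrow> nat \<Rightarrow> (nat \<Rightarrow> 'a::field) set \<Rightarrow> (nat \<Rightarrow> 'a) set \<Rightarrow> bool" where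
  "contains_aff_copy m n B A \<longleftrightarrow> (\<exists>B'. B' \<subseteq> A \<and> aff_isomorphic m n B B')"

definition ex_aff :: "nat \<Rightarrow> nat \<Rightarrow> (nat \<Rightarrow> 'a::{finite,field}) set \<Rightarrow> nat" where
  "ex_aff m n B = Max {card A | A. A \<subseteq> vecs n \<and> \<not> contains_aff_copy m n B A}"

definition weakly_sidorenko :: "real \<Rightarrow> nat \<Rightarrow> (nat \<Rightarrow> 'a::{finite,field}) set \<Rightarrow> bool" where
  "weakly_sidorenko C m B \<longleftrightarrow>
     (\<forall>n A. A \<subseteq> (vecs n :: (nat \<Rightarrow> 'a) set) \<longrightarrow>
        real (hom_aff m n B A) \<ge>
          (real (card A) / real (card (UNIV :: 'a set)) ^ n) powr C * (real (card (UNIV :: 'a set)) ^ n) ^ rank_aff B)"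

end

theory Submission
  imports Defs "HOL-Library.Function_Algebras"
begin

lemma fun_sum_apply: "(\<Sum>x\<in>S. f x) i = (\<Sum>x\<in>S. f x i)"
  for f :: "'b \<Rightarrow> nat \<Rightarrow> 'a::comm_monoid_add"
  by (induct S rule: infinite_finite_induct) auto

lemma finite_vecs: "finite (vecs n :: (nat \<Rightarrow> 'a::{finite,field}) set)"
proof -
  have "vecs n \<subseteq> (\<lambda>v i. if i < n then v i else 0) ` ({..<n} \<rightarrow>\<^sub>E (UNIV :: 'a set))"
  proof
    fix v :: "nat \<Rightarrow> 'a" assume "v \<in> vecs n"
    then have "v = (\<lambda>i. if i < n then restrict v {..<n} i else 0)"
      by (auto simp: vecs_def fun_eq_iff)
    moreover have "restrict v {..<n} \<in> ({..<n} \<rightarrow>\<^sub>E (UNIV :: 'a set))" by simp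
    ultimately show "v \<in> (\<lambda>v i. if i < n then v i else 0) ` ({..<n} \<rightarrow>\<^sub>E (UNIV :: 'a set))"
      by (rule image_eqI)
  qed
  then show ?thesis by (rule finite_subset) (intro finite_imageI finite_PiE; simp)
qed

lemma affine_map_in_vecs: "affine_map m n f \<Longrightarrow> x \<in> vecs m \<Longrightarrow> f x \<in> vecs n"
  unfolding affine_map_def vecs_def by auto

lemma comb_in_vecs: "(\<forall>k\<in>I. x k \<in> vecs m) \<Longrightarrow> (\<lambda>j. \<Sum>k\<in>I. \<mu> k * x k j) \<in> vecs m"
  unfolding vecs_def by auto

lemma affine_comb:
  assumes "affine_map m n f" "\<forall>k\<in>I. x k \<in> vecs m" "sum \<mu> I = 1"
  shows "f (\<lambda>j. \<Sum>k\<in>I. \<mu> k * x k j) = (\<lambda>j. \<Sum>k\<in>I. \<mu> k * f (x k) j)"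
proof -
  obtain M b where b: "b \<in> vecs n" and f: "\<forall>x\<in>vecs m. f x = (\<lambda>i. if i < n then b i + (\<Sum>j<m. M i j * x j) else 0)"
    using assms(1) unfolding affine_map_def by blast
  have I: "finite I" using assms(3) by (metis sum.infinite zero_neq_one)
  show ?thesis
  proof
    fix i
    show "f (\<lambda>j. \<Sum>k\<in>I. \<mu> k * x k j) i = (\<Sum>k\<in>I. \<mu> k * f (x k) i)"
    proof (cases "i < n")
      case True
      have "f (\<lambda>j. \<Sum>k\<in>I. \<mu> k * x k j) i = b i + (\<Sum>j<m. M i j * (\<Sum>k\<in>I. \<mu> k * x k j))"
        using f comb_in_vecs[OF assms(2)] True by simp
      also have "\<dots> = (\<Sum>k\<in>I. \<mu> k) * b i + (\<Sum>k\<in>I. \<mu> k * (\<Sum>j<m. M i j * x k j))"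
      proof -
        have "(\<Sum>j<m. M i j * (\<Sum>k\<in>I. \<mu> k * x k j)) = (\<Sum>j<m. \<Sum>k\<in>I. \<mu> k * (M i j * x k j))"
          by (simp add: sum_distrib_left mult_ac)
        also have "\<dots> = (\<Sum>k\<in>I. \<Sum>j<m. \<mu> k * (M i j * x k j))"
          by (rule sum.swap)
        also have "\<dots> = (\<Sum>k\<in>I. \<mu> k * (\<Sum>j<m. M i j * x k j))"
          by (simp add: sum_distrib_left)
        finally show ?thesis using assms(3) by simp
      qed
      also have "\<dots> = (\<Sum>k\<in>I. \<mu> k * f (x k) i)"
        using f assms(2) True by (simp add: sum_distrib_right sum.distrib[symmetric] distrib_left)
      finally show ?thesis .
    next
      case False
      then show ?thesis using f assms(2) comb_in_vecs[OF assms(2)] by simp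
    qed
  qed
qed

lemma affine_map_comp:
  assumes f: "affine_map m n f" and g: "affine_map n p g"
  shows "affine_map m p (g \<circ> f)"
proof -
  obtain M1 b1 where b1: "b1 \<in> vecs n" and f: "\<forall>x\<in>vecs m. f x = (\<lambda>i. if i < n then b1 i + (\<Sum>j<m. M1 i j * x j) else 0)"
    using assms(1) unfolding affine_map_def by blast
  obtain M2 b2 where b2: "b2 \<in> vecs p" and g: "\<forall>x\<in>vecs n. g x = (\<lambda>i. if i < p then b2 i + (\<Sum>j<n. M2 i j * x j) else 0)"
    using assms(2) unfolding affine_map_def by blast
  define M where "M i j = (\<Sum>k<n. M2 i k * M1 k j)" for i j
  define b where "b i = (if i < p then b2 i + (\<Sum>k<n. M2 i k * b1 k) else 0)" for i
  have "b \<in> vecs p" unfolding b_def vecs_def by auto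
  moreover have "\<forall>x\<in>vecs m. (g \<circ> f) x = (\<lambda>i. if i < p then b i + (\<Sum>j<m. M i j * x j) else 0)"
  proof
    fix x :: "nat \<Rightarrow> 'a" assume x: "x \<in> vecs m"
    have fx: "f x \<in> vecs n" using affine_map_in_vecs[OF assms(1) x] .
    show "(g \<circ> f) x = (\<lambda>i. if i < p then b i + (\<Sum>j<m. M i j * x j) else 0)"
    proof
      fix i
      show "(g \<circ> f) x i = (if i < p then b i + (\<Sum>j<m. M i j * x j) else 0)"
      proof (cases "i < p")
        case True
        have "(g \<circ> f) x i = b2 i + (\<Sum>k<n. M2 i k * (b1 k + (\<Sum>j<m. M1 k j * x j)))"
          using g fx f x True by simp
        also have "\<dots> = b i + (\<Sum>j<m. M i j * x j)"
        proof -
          have "(\<Sum>k<n. M2 i k * (\<Sum>j<m. M1 k j * x j)) = (\<Sum>k<n. \<Sum>j<m. M2 i k * M1 k j * x j)"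
            by (simp add: sum_distrib_left mult_ac)
          also have "\<dots> = (\<Sum>j<m. \<Sum>k<n. M2 i k * M1 k j * x j)"
            by (rule sum.swap)
          also have "\<dots> = (\<Sum>j<m. M i j * x j)"
            by (simp add: M_def sum_distrib_right)
          finally show ?thesis using True by (simp add: b_def distrib_left sum.distrib)
        qed
        finally show ?thesis using True by simp
      qed (use g fx in simp)
    qed
  qed
  ultimately show ?thesis unfolding affine_map_def by blast
qed

lemma aff_ext_cong: "aff_ext m n B g \<Longrightarrow> (\<forall>x\<in>B. g x = h x) \<Longrightarrow> aff_ext m n B h"
  unfolding aff_ext_def by metis

lemma aff_ext_comp:
  assumes "aff_ext m n B g" "aff_ext n p B2 h" "g ` B \<subseteq> B2"
  shows "aff_ext m p B (h \<circ> g)"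
proof -
  obtain F1 where F1: "affine_map m n F1" "\<forall>x\<in>B. g x = F1 x" using assms(1) unfolding aff_ext_def by blast
  obtain F2 where F2: "affine_map n p F2" "\<forall>x\<in>B2. h x = F2 x" using assms(2) unfolding aff_ext_def by blast
  have "affine_map m p (F2 \<circ> F1)" by (rule affine_map_comp[OF F1(1) F2(1)])
  moreover have "\<forall>x\<in>B. (h \<circ> g) x = (F2 \<circ> F1) x" using F1 F2 assms(3) by auto
  ultimately show ?thesis unfolding aff_ext_def by blast
qed

lemma aff_ext_id: "B \<subseteq> vecs m \<Longrightarrow> aff_ext m m B (\<lambda>x. x)"
proof -
  assume B: "B \<subseteq> vecs m"
  have "affine_map m m (\<lambda>x. x)"
    unfolding affine_map_def
    apply (rule exI[of _ "\<lambda>i j. if i = j then 1 else 0"], rule exI[of _ "\<lambda>i. 0"])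
    apply (intro conjI ballI)
    subgoal by (simp add: vecs_def)
    subgoal for x
    proof -
      assume x: "x \<in> vecs m"
      have h: "\<And>i. (\<Sum>j<m. (if i = j then 1 else 0) * x j) = (\<Sum>j<m. if i = j then x j else 0)"
        by (rule sum.cong) auto
      show ?thesis using h x by (auto simp: vecs_def fun_eq_iff)
    qed
    done
  then show ?thesis unfolding aff_ext_def by auto
qed


definition sc :: "'a::field \<Rightarrow> (nat \<Rightarrow> 'a) \<Rightarrow> (nat \<Rightarrow> 'a)" where
  "sc c v = (\<lambda>i. c * v i)"

lemma vs_sc: "vector_space (sc :: 'a::field \<Rightarrow> _)"
  by unfold_locales (auto simp: sc_def fun_eq_iff algebra_simps plus_fun_def)

lemma vsp_sc: "vector_space_pair (sc :: 'a::field \<Rightarrow> _) sc"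
  unfolding vector_space_pair_def using vs_sc by blast

lemma aff_extend:
  fixes P :: "(nat \<Rightarrow> 'a::field) set" and \<phi> :: "(nat \<Rightarrow> 'a) \<Rightarrow> (nat \<Rightarrow> 'a)"
  assumes P: "finite P" "P \<subseteq> vecs n" "aff_indep P" and \<phi>: "\<forall>p\<in>P. \<phi> p \<in> vecs m"
  shows "\<exists>h. affine_map n m h \<and> (\<forall>p\<in>P. h p = \<phi> p)"
proof -
  define lift :: "(nat \<Rightarrow> 'a) \<Rightarrow> (nat \<Rightarrow> 'a)" where "lift x = (\<lambda>i. if i = 0 then 1 else x (i - 1))" for x
  define e :: "nat \<Rightarrow> (nat \<Rightarrow> 'a)" where "e k = (\<lambda>i. if i = k then 1 else 0)" for k
  have lift_Suc: "lift x (Suc i) = x i" for x i by (simp add: lift_def)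
  have lift0: "lift x 0 = 1" for x by (simp add: lift_def)
  have inj: "inj lift"
  proof (rule injI)
    fix x y assume "lift x = lift y"
    then have "lift x (Suc i) = lift y (Suc i)" for i by simp
    then show "x = y" by (simp add: lift_Suc fun_eq_iff)
  qed
  have indep: "\<not> module.dependent sc (lift ` P)"
  proof (rule vector_space.independent_if_scalars_zero[OF vs_sc])
    show "finite (lift ` P)" using P(1) by simp
    fix f v assume sum0: "(\<Sum>x\<in>lift ` P. sc (f x) x) = 0" and v: "v \<in> lift ` P"
    define c where "c p = f (lift p)" for p
    have s: "(\<Sum>p\<in>P. sc (c p) (lift p)) = 0"
      using sum0 by (simp add: sum.reindex[OF inj_on_subset[OF inj subset_UNIV]] c_def)
    have s0: "(\<Sum>p\<in>P. c p) = 0"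
      using fun_cong[OF s, of 0] by (simp add: fun_sum_apply sc_def lift0)
    have si: "\<forall>i. (\<Sum>p\<in>P. c p * p i) = 0"
      using fun_cong[OF s, of "Suc i" for i] by (simp add: fun_sum_apply sc_def lift_Suc)
    have "\<forall>p\<in>P. c p = 0" using P(3) s0 si unfolding aff_indep_def by blast
    then show "f v = 0" using v by (auto simp: c_def)
  qed
  obtain L where L: "Vector_Spaces.linear sc sc L" and Lp: "\<forall>v\<in>lift ` P. L v = \<phi> (inv lift v)"
    using vector_space_pair.linear_independent_extend[OF vsp_sc indep, of "\<lambda>v. \<phi> (inv lift v)"] by blast
  have mh: "module_hom sc sc L" using L by (simp add: module_hom_iff_linear)
  have Llift: "L (lift p) = \<phi> p" if "p \<in> P" for p using Lp that inj by (simp add: inv_f_f)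
  define h where "h x = (\<lambda>i. if i < m then L (lift x) i else 0)" for x
  have hp: "\<forall>p\<in>P. h p = \<phi> p"
    using \<phi> by (auto simp: h_def Llift vecs_def fun_eq_iff)
  define M where "M i j = L (e (Suc j)) i" for i j
  define b where "b i = (if i < m then L (e 0) i else 0)" for i
  have "affine_map n m h"
    unfolding affine_map_def
  proof (intro exI conjI ballI)
    show "b \<in> vecs m" by (simp add: b_def vecs_def)
    fix x :: "nat \<Rightarrow> 'a" assume x: "x \<in> vecs n"
    have lx: "lift x = e 0 + (\<Sum>j<n. sc (x j) (e (Suc j)))"
    proof
      fix i show "lift x i = (e 0 + (\<Sum>j<n. sc (x j) (e (Suc j)))) i"
      proof (cases i)
        case 0 then show ?thesis by (simp add: lift0 e_def fun_sum_apply sc_def)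
      next
        case (Suc i')
        have "(\<Sum>j<n. x j * (if Suc i' = Suc j then 1 else 0)) = (\<Sum>j<n. if i' = j then x j else 0)"
          by (rule sum.cong) auto
        then show ?thesis using x Suc by (auto simp: lift_Suc e_def fun_sum_apply sc_def vecs_def)
      qed
    qed
    have "L (lift x) = L (e 0) + (\<Sum>j<n. sc (x j) (L (e (Suc j))))"
      unfolding lx module_hom.add[OF mh] module_hom.sum[OF mh] module_hom.scale[OF mh] ..
    then show "h x = (\<lambda>i. if i < m then b i + (\<Sum>j<n. M i j * x j) else 0)"
      by (auto simp: h_def b_def M_def fun_eq_iff fun_sum_apply sc_def mult.commute)
  qed
  then show ?thesis using hp by blast
qed


lemma aff_indep_insert:
  fixes P :: "(nat \<Rightarrow> 'a::field) set"
  assumes P: "finite P" "aff_indep P" and x: "x \<notin> P"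
    and nh: "\<not> (\<exists>lam. sum lam P = 1 \<and> x = (\<lambda>j. \<Sum>p\<in>P. lam p * p j))"
  shows "aff_indep (insert x P)"
  unfolding aff_indep_def
proof (intro allI impI)
  fix c :: "(nat \<Rightarrow> 'a) \<Rightarrow> 'a"
  assume "(\<Sum>y\<in>insert x P. c y) = 0 \<and> (\<forall>i. (\<Sum>y\<in>insert x P. c y * y i) = 0)"
  then have s0: "c x + (\<Sum>y\<in>P. c y) = 0" and si: "\<And>i. c x * x i + (\<Sum>y\<in>P. c y * y i) = 0"
    using P(1) x by auto
  have cx: "c x = 0"
  proof (rule ccontr)
    assume cx: "c x \<noteq> 0"
    define lam where "lam p = - c p / c x" for p
    have cxe: "c x = - sum c P" using s0 by (simp add: eq_neg_iff_add_eq_0)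
    have "sum lam P = 1"
      using cxe cx by (simp add: lam_def sum_divide_distrib[symmetric] sum_negf field_simps)
    moreover have "x = (\<lambda>j. \<Sum>p\<in>P. lam p * p j)"
    proof
      fix j
      have "(\<Sum>p\<in>P. lam p * p j) = - (\<Sum>p\<in>P. c p * p j) / c x"
        by (simp add: lam_def sum_divide_distrib sum_negf[symmetric])
      also have "\<dots> = x j"
      proof -
        have "c x * x j = - (\<Sum>p\<in>P. c p * p j)" using si[of j] by (simp add: eq_neg_iff_add_eq_0)
        then show ?thesis using cx by (simp add: field_simps)
      qed
      finally show "x j = (\<Sum>p\<in>P. lam p * p j)" by simp
    qed
    ultimately show False using nh by blast
  qed
  have "\<forall>y\<in>P. c y = 0"
    using P(2) s0 si cx unfolding aff_indep_def by simp
  then show "\<forall>y\<in>insert x P. c y = 0" using cx by simp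
qed

lemma aff_indep_tuple:
  fixes t :: "nat \<Rightarrow> (nat \<Rightarrow> 'a::field)"
  assumes "inj_on t K" "aff_indep (t ` K)" "sum d K = 0" "\<forall>i. (\<Sum>k\<in>K. d k * t k i) = 0"
  shows "\<forall>k\<in>K. d k = 0"
proof -
  define c where "c y = d (the_inv_into K t y)" for y
  have ct: "c (t k) = d k" if "k \<in> K" for k using assms(1) that by (simp add: c_def the_inv_into_f_f)
  have "(\<Sum>y\<in>t ` K. c y) = 0" using assms(1,3) ct by (simp add: sum.reindex)
  moreover have "\<forall>i. (\<Sum>y\<in>t ` K. c y * y i) = 0" using assms(1,4) ct by (simp add: sum.reindex)
  ultimately have "\<forall>y\<in>t ` K. c y = 0" using assms(2) unfolding aff_indep_def by blast
  then show ?thesis using ct by auto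
qed

lemma span_lemma:
  fixes B :: "(nat \<Rightarrow> 'a::field) set"
  assumes B: "finite B" and S: "S \<subseteq> B" "aff_indep S"
    and mx: "\<forall>T. T \<subseteq> B \<and> aff_indep T \<longrightarrow> card T \<le> card S" and b: "b \<in> B"
  shows "\<exists>lam. sum lam S = 1 \<and> b = (\<lambda>j. \<Sum>s\<in>S. lam s * s j)"
proof (cases "b \<in> S")
  case True
  have fS: "finite S" using B S finite_subset by blast
  show ?thesis
  proof (intro exI conjI)
    show "sum (\<lambda>s. if s = b then 1 else 0) S = 1" using True fS by simp
    show "b = (\<lambda>j. \<Sum>s\<in>S. (if s = b then 1 else 0) * s j)"
    proof
      fix j
      have "(\<Sum>s\<in>S. (if s = b then 1 else 0) * s j) = (\<Sum>s\<in>S. if s = b then b j else 0)"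
        by (rule sum.cong) auto
      then show "b j = (\<Sum>s\<in>S. (if s = b then 1 else 0) * s j)" using True fS by simp
    qed
  qed
next
  case False
  have fS: "finite S" using B S finite_subset by blast
  have "card (insert b S) > card S" using False fS by simp
  then have "\<not> aff_indep (insert b S)" using mx S b by (metis insert_subset not_le)
  moreover have "\<not> (\<exists>lam. sum lam S = 1 \<and> b = (\<lambda>j. \<Sum>p\<in>S. lam p * p j)) \<Longrightarrow> aff_indep (insert b S)"
    by (rule aff_indep_insert[OF fS S(2) False])
  ultimately show ?thesis by blast
qed


definition Mu :: "nat \<Rightarrow> (nat \<Rightarrow> 'a::field) set" where
  "Mu j = {\<mu> \<in> {..<j} \<rightarrow>\<^sub>E UNIV. sum \<mu> {..<j} = 1}"

definition combI :: "(nat \<Rightarrow> 'a::field) \<Rightarrow> (nat \<Rightarrow> nat \<Rightarrow> 'a) \<Rightarrow> nat \<Rightarrow> (nat \<Rightarrow> 'a)" where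
  "combI \<mu> t j = (\<lambda>i. \<Sum>k<j. \<mu> k * t k i)"

definition hullI :: "(nat \<Rightarrow> nat \<Rightarrow> 'a::field) \<Rightarrow> nat \<Rightarrow> (nat \<Rightarrow> 'a) set" where
  "hullI t j = (\<lambda>\<mu>. combI \<mu> t j) ` Mu j"

lemma good_tuple:
  fixes t :: "nat \<Rightarrow> nat \<Rightarrow> 'a::field"
  shows "(\<forall>j<i. t j \<notin> hullI t j) \<Longrightarrow> inj_on t {..<i} \<and> aff_indep (t ` {..<i})"
proof (induct i)
  case 0
  then show ?case by (simp add: aff_indep_def)
next
  case (Suc i)
  then have IH: "inj_on t {..<i}" "aff_indep (t ` {..<i})" and ti: "t i \<notin> hullI t i" by auto
  have notin: "t i \<notin> t ` {..<i}"
  proof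
    assume "t i \<in> t ` {..<i}"
    then obtain k where k: "k < i" "t i = t k" by auto
    define \<mu> where "\<mu> = restrict (\<lambda>l. if l = k then 1 else (0::'a)) {..<i}"
    have "\<mu> \<in> Mu i" using k by (simp add: \<mu>_def Mu_def)
    moreover have "combI \<mu> t i = t k"
    proof
      fix x
      have "(\<Sum>l<i. \<mu> l * t l x) = (\<Sum>l<i. if l = k then t k x else 0)"
        by (rule sum.cong) (auto simp: \<mu>_def)
      then show "combI \<mu> t i x = t k x" using k by (simp add: combI_def)
    qed
    ultimately have "t i \<in> hullI t i" using k unfolding hullI_def by (metis image_eqI)
    then show False using ti by simp
  qed
  have nh: "\<not> (\<exists>lam. sum lam (t ` {..<i}) = 1 \<and> t i = (\<lambda>j. \<Sum>p\<in>t ` {..<i}. lam p * p j))"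
  proof
    assume "\<exists>lam. sum lam (t ` {..<i}) = 1 \<and> t i = (\<lambda>j. \<Sum>p\<in>t ` {..<i}. lam p * p j)"
    then obtain lam where l1: "sum lam (t ` {..<i}) = 1" and l2: "t i = (\<lambda>j. \<Sum>p\<in>t ` {..<i}. lam p * p j)"
      by blast
    define \<mu> where "\<mu> = restrict (\<lambda>k. lam (t k)) {..<i}"
    have "sum \<mu> {..<i} = sum lam (t ` {..<i})"
      using IH(1) by (simp add: \<mu>_def sum.reindex)
    then have "\<mu> \<in> Mu i" using l1 by (simp add: Mu_def \<mu>_def)
    moreover have "combI \<mu> t i = t i"
    proof
      fix x
      have "(\<Sum>p\<in>t ` {..<i}. lam p * p x) = (\<Sum>k<i. lam (t k) * t k x)"
        using IH(1) by (simp add: sum.reindex)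
      also have "\<dots> = (\<Sum>k<i. \<mu> k * t k x)" by (simp add: \<mu>_def)
      finally show "combI \<mu> t i x = t i x" using l2 by (simp add: combI_def)
    qed
    ultimately have "t i \<in> hullI t i" unfolding hullI_def by (metis image_eqI)
    then show False using ti by simp
  qed
  have "aff_indep (insert (t i) (t ` {..<i}))"
    by (rule aff_indep_insert[OF _ IH(2) notin nh]) simp
  moreover have "inj_on t (insert i {..<i})" using IH(1) notin by simp
  ultimately show ?case by (simp add: lessThan_Suc)
qed

lemma card_UNIV_ge2: "2 \<le> card (UNIV :: 'a::{finite,field} set)"
proof -
  have "card {0::'a, 1} = 2" by simp
  moreover have "card {0::'a, 1} \<le> card (UNIV :: 'a set)" by (rule card_mono) auto
  ultimately show ?thesis by simp
qed

lemma Mu0: "Mu 0 = {}" by (simp add: Mu_def)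

lemma card_Mu_Suc: "card (Mu (Suc j) :: (nat \<Rightarrow> 'a::{finite,field}) set) \<le> card (UNIV :: 'a set) ^ j"
proof -
  define F :: "(nat \<Rightarrow> 'a) \<Rightarrow> (nat \<Rightarrow> 'a)" where "F \<mu> = restrict (\<lambda>k. \<mu> (Suc k)) {..<j}" for \<mu>
  have "inj_on F (Mu (Suc j))"
  proof (rule inj_onI)
    fix \<mu>1 \<mu>2 assume m1: "\<mu>1 \<in> Mu (Suc j)" and m2: "\<mu>2 \<in> Mu (Suc j)" and eq: "F \<mu>1 = F \<mu>2"
    have s: "\<And>k. k < j \<Longrightarrow> \<mu>1 (Suc k) = \<mu>2 (Suc k)"
    proof -
      fix k assume "k < j"
      have "F \<mu>1 k = F \<mu>2 k" using eq by simp
      then show "\<mu>1 (Suc k) = \<mu>2 (Suc k)" using \<open>k < j\<close> by (simp add: F_def)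
    qed
    have "sum \<mu>1 {..<Suc j} = 1" "sum \<mu>2 {..<Suc j} = 1" using m1 m2 by (simp_all add: Mu_def)
    then have e1: "\<mu>1 0 + (\<Sum>k<j. \<mu>1 (Suc k)) = 1" and e2: "\<mu>2 0 + (\<Sum>k<j. \<mu>2 (Suc k)) = 1"
      by (simp_all only: sum.lessThan_Suc_shift)
    have e3: "(\<Sum>k<j. \<mu>1 (Suc k)) = (\<Sum>k<j. \<mu>2 (Suc k))"
      by (rule sum.cong[OF refl]) (simp add: s)
    have "\<mu>1 0 = 1 - (\<Sum>k<j. \<mu>1 (Suc k))" using e1 by (simp add: eq_diff_eq)
    moreover have "\<mu>2 0 = 1 - (\<Sum>k<j. \<mu>2 (Suc k))" using e2 by (simp add: eq_diff_eq)
    ultimately have z: "\<mu>1 0 = \<mu>2 0" using e3 by simp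
    show "\<mu>1 = \<mu>2"
    proof
      fix l show "\<mu>1 l = \<mu>2 l"
      proof (cases "l < Suc j")
        case True
        show ?thesis
        proof (cases l)
          case 0 then show ?thesis using z by simp
        next
          case (Suc k) then show ?thesis using s True by simp
        qed
      next
        case False
        have "\<mu>1 \<in> {..<Suc j} \<rightarrow>\<^sub>E UNIV" "\<mu>2 \<in> {..<Suc j} \<rightarrow>\<^sub>E UNIV"
          using m1 m2 unfolding Mu_def by blast+
        then show ?thesis using False by (metis PiE_arb lessThan_iff)
      qed
    qed
  qed
  moreover have "F ` Mu (Suc j) \<subseteq> {..<j} \<rightarrow>\<^sub>E (UNIV :: 'a set)" by (rule image_subsetI) (simp add: F_def)
  moreover have "finite ({..<j} \<rightarrow>\<^sub>E (UNIV :: 'a set))" by (rule finite_PiE) auto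
  ultimately have "card (Mu (Suc j) :: (nat \<Rightarrow> 'a) set) \<le> card ({..<j} \<rightarrow>\<^sub>E (UNIV :: 'a set))"
    by (rule card_inj_on_le)
  then show ?thesis by (simp add: card_PiE)
qed

lemma geom_less: "(2::nat) \<le> q \<Longrightarrow> (\<Sum>j<n. q ^ j) < q ^ n"
proof (induct n)
  case 0 then show ?case by simp
next
  case (Suc n)
  then have "(\<Sum>j<Suc n. q ^ j) < q ^ n + q ^ n" by simp
  also have "\<dots> = 2 * q ^ n" by simp
  also have "\<dots> \<le> q * q ^ n" by (rule mult_right_mono) (use Suc(2) in simp_all)
  also have "\<dots> = q ^ Suc n" by simp
  finally show ?case .
qed

lemma card_hull_set:
  fixes A :: "(nat \<Rightarrow> 'a::{finite,field}) set"
  assumes A: "finite A" and j: "j < r"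
  shows "card {t \<in> {..<r} \<rightarrow>\<^sub>E A. t j \<in> hullI t j} \<le> card A ^ (r - 1) * card (Mu j :: (nat \<Rightarrow> 'a) set)"
proof -
  define G :: "(nat \<Rightarrow> nat \<Rightarrow> 'a) \<times> (nat \<Rightarrow> 'a) \<Rightarrow> (nat \<Rightarrow> nat \<Rightarrow> 'a)"
    where "G = (\<lambda>(u, \<mu>). u(j := combI \<mu> u j))"
  have sub: "{t \<in> {..<r} \<rightarrow>\<^sub>E A. t j \<in> hullI t j} \<subseteq> G ` ((({..<r} - {j}) \<rightarrow>\<^sub>E A) \<times> Mu j)"
  proof
    fix t assume "t \<in> {t \<in> {..<r} \<rightarrow>\<^sub>E A. t j \<in> hullI t j}"
    then have t: "t \<in> {..<r} \<rightarrow>\<^sub>E A" and th: "t j \<in> hullI t j" by auto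
    obtain \<mu> where mu: "\<mu> \<in> Mu j" and tj: "t j = combI \<mu> t j" using th unfolding hullI_def by blast
    define u where "u = restrict t ({..<r} - {j})"
    have u: "u \<in> ({..<r} - {j}) \<rightarrow>\<^sub>E A" using t unfolding u_def by (auto simp: PiE_iff)
    have cu: "combI \<mu> u j = combI \<mu> t j"
      unfolding combI_def u_def by (intro ext sum.cong refl) (use j in auto)
    have "G (u, \<mu>) = t"
    proof
      fix l
      show "G (u, \<mu>) l = t l"
      proof (cases "l = j")
        case True then show ?thesis using cu tj by (simp add: G_def)
      next
        case False
        show ?thesis
        proof (cases "l < r")
          case True then show ?thesis using False by (simp add: G_def u_def)
        next
          case nr: False
          have "t l = undefined" using t nr by (metis PiE_arb lessThan_iff)
          then show ?thesis using False nr by (simp add: G_def u_def)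
        qed
      qed
    qed
    moreover have "(u, \<mu>) \<in> (({..<r} - {j}) \<rightarrow>\<^sub>E A) \<times> Mu j" using u mu by simp
    ultimately show "t \<in> G ` ((({..<r} - {j}) \<rightarrow>\<^sub>E A) \<times> Mu j)" by (metis image_eqI)
  qed
  have fMu: "finite (Mu j :: (nat \<Rightarrow> 'a) set)"
  proof (rule finite_subset)
    show "(Mu j :: (nat \<Rightarrow> 'a) set) \<subseteq> {..<j} \<rightarrow>\<^sub>E UNIV" unfolding Mu_def by blast
    show "finite ({..<j} \<rightarrow>\<^sub>E (UNIV :: 'a set))" by (rule finite_PiE) simp_all
  qed
  have fP: "finite (({..<r} - {j}) \<rightarrow>\<^sub>E A)" using A by (intro finite_PiE) simp_all
  have fprod: "finite ((({..<r} - {j}) \<rightarrow>\<^sub>E A) \<times> (Mu j :: (nat \<Rightarrow> 'a) set))" using fP fMu by (rule finite_cartesian_product)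
  have "card {t \<in> {..<r} \<rightarrow>\<^sub>E A. t j \<in> hullI t j} \<le> card (G ` ((({..<r} - {j}) \<rightarrow>\<^sub>E A) \<times> Mu j))"
    by (rule card_mono[OF finite_imageI[OF fprod] sub])
  also have "\<dots> \<le> card ((({..<r} - {j}) \<rightarrow>\<^sub>E A) \<times> (Mu j :: (nat \<Rightarrow> 'a) set))" by (rule card_image_le[OF fprod])
  also have "\<dots> = card A ^ (r - 1) * card (Mu j :: (nat \<Rightarrow> 'a) set)"
    using j by (simp add: card_cartesian_product card_PiE)
  finally show ?thesis .
qed

lemma bad_count:
  fixes A :: "(nat \<Rightarrow> 'a::{finite,field}) set"
  assumes A: "finite A" "A \<noteq> {}" and r: "1 \<le> r"
  shows "card {t \<in> {..<r} \<rightarrow>\<^sub>E A. \<not> (inj_on t {..<r} \<and> aff_indep (t ` {..<r}))}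
          < card (UNIV :: 'a set) ^ (r - 1) * card A ^ (r - 1)"
proof -
  let ?q = "card (UNIV :: 'a set)"
  have sub: "{t \<in> {..<r} \<rightarrow>\<^sub>E A. \<not> (inj_on t {..<r} \<and> aff_indep (t ` {..<r}))}
      \<subseteq> (\<Union>j<r. {t \<in> {..<r} \<rightarrow>\<^sub>E A. t j \<in> hullI t j})"
    using good_tuple by blast
  have fin: "finite (\<Union>j<r. {t \<in> {..<r} \<rightarrow>\<^sub>E A. t j \<in> hullI t j})"
  proof (rule finite_subset)
    show "finite ({..<r} \<rightarrow>\<^sub>E A)" using A(1) by (intro finite_PiE) simp_all
  qed auto
  have "card {t \<in> {..<r} \<rightarrow>\<^sub>E A. \<not> (inj_on t {..<r} \<and> aff_indep (t ` {..<r}))}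
      \<le> card (\<Union>j<r. {t \<in> {..<r} \<rightarrow>\<^sub>E A. t j \<in> hullI t j})"
    by (rule card_mono[OF fin sub])
  also have "\<dots> \<le> (\<Sum>j<r. card {t \<in> {..<r} \<rightarrow>\<^sub>E A. t j \<in> hullI t j})"
    by (rule card_UN_le) simp
  also have "\<dots> \<le> (\<Sum>j<r. card A ^ (r - 1) * card (Mu j :: (nat \<Rightarrow> 'a) set))"
    by (rule sum_mono) (use card_hull_set[OF A(1)] in auto)
  also have "\<dots> = card A ^ (r - 1) * (\<Sum>j<r. card (Mu j :: (nat \<Rightarrow> 'a) set))"
    by (simp add: sum_distrib_left)
  also have "\<dots> < card A ^ (r - 1) * ?q ^ (r - 1)"
  proof -
    obtain r' where r': "r = Suc r'" using r by (cases r) auto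
    have "(\<Sum>j<r. card (Mu j :: (nat \<Rightarrow> 'a) set)) = (\<Sum>j<r'. card (Mu (Suc j) :: (nat \<Rightarrow> 'a) set))"
      unfolding r' sum.lessThan_Suc_shift by (simp add: Mu0)
    also have "\<dots> \<le> (\<Sum>j<r'. ?q ^ j)" by (rule sum_mono) (rule card_Mu_Suc)
    also have "\<dots> < ?q ^ r'" by (rule geom_less[OF card_UNIV_ge2])
    finally have "(\<Sum>j<r. card (Mu j :: (nat \<Rightarrow> 'a) set)) < ?q ^ (r - 1)" using r' by simp
    moreover have "card A ^ (r - 1) > 0" using A by (simp add: card_gt_0_iff)
    ultimately show ?thesis by simp
  qed
  finally show ?thesis by (simp add: mult.commute)
qed


lemma Aut_finite:
  assumes "finite B"
  shows "finite (Aut_aff m B)"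
proof (rule finite_subset)
  show "Aut_aff m B \<subseteq> B \<rightarrow>\<^sub>E B"
    by (auto simp: Aut_aff_def aff_iso_def PiE_iff bij_betw_def extensional_def)
  show "finite (B \<rightarrow>\<^sub>E B)" using assms by (intro finite_PiE) simp_all
qed

lemma Aut_pos:
  assumes B: "B \<subseteq> vecs m" "finite B"
  shows "1 \<le> card (Aut_aff m B)"
proof -
  let ?i = "restrict (\<lambda>x. x) B"
  have bij: "bij_betw ?i B B" by (simp add: bij_betw_def inj_on_def)
  have inv: "the_inv_into B ?i y = y" if "y \<in> B" for y
    by (rule the_inv_into_f_eq) (use that bij in \<open>auto simp: bij_betw_def\<close>)
  have "aff_ext m m B ?i" by (rule aff_ext_cong[OF aff_ext_id[OF B(1)]]) simp
  moreover have "aff_ext m m B (the_inv_into B ?i)" by (rule aff_ext_cong[OF aff_ext_id[OF B(1)]]) (simp add: inv)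
  ultimately have "?i \<in> Aut_aff m B" using bij by (simp add: Aut_aff_def aff_iso_def)
  then have "Aut_aff m B \<noteq> {}" by blast
  then show ?thesis using Aut_finite[OF B(2)] by (simp add: Suc_le_eq card_gt_0_iff)
qed

lemma iso_le_aut:
  assumes finB: "finite B" and iso0: "aff_iso m n B B' \<psi>0"
  shows "card {\<psi> \<in> extensional B. aff_iso m n B B' \<psi>} \<le> card (Aut_aff m B)"
proof -
  define inv0 where "inv0 = the_inv_into B \<psi>0"
  have bij0: "bij_betw \<psi>0 B B'" and ext0: "aff_ext m n B \<psi>0" and extinv0: "aff_ext n m B' inv0"
    using iso0 by (auto simp: aff_iso_def inv0_def)
  have binv0: "bij_betw inv0 B' B" unfolding inv0_def by (rule bij_betw_the_inv_into[OF bij0])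
  define \<Phi> where "\<Phi> \<psi> = restrict (\<lambda>x. inv0 (\<psi> x)) B" for \<psi> :: "(nat \<Rightarrow> 'a) \<Rightarrow> (nat \<Rightarrow> 'a)"
  have inAut: "\<Phi> \<psi> \<in> Aut_aff m B" if \<psi>: "\<psi> \<in> {\<psi> \<in> extensional B. aff_iso m n B B' \<psi>}" for \<psi>
  proof -
    have bij\<psi>: "bij_betw \<psi> B B'" and ext\<psi>: "aff_ext m n B \<psi>" and extinv\<psi>: "aff_ext n m B' (the_inv_into B \<psi>)"
      using \<psi> by (auto simp: aff_iso_def)
    have bijc: "bij_betw (inv0 \<circ> \<psi>) B B" by (rule bij_betw_trans[OF bij\<psi> binv0])
    have bij\<Phi>: "bij_betw (\<Phi> \<psi>) B B"
      using bijc by (rule iffD1[OF bij_betw_cong, rotated]) (simp add: \<Phi>_def)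
    have "aff_ext m m B (inv0 \<circ> \<psi>)"
      by (rule aff_ext_comp[OF ext\<psi> extinv0]) (use bij\<psi> in \<open>simp add: bij_betw_def\<close>)
    then have e1: "aff_ext m m B (\<Phi> \<psi>)" by (rule aff_ext_cong) (simp add: \<Phi>_def)
    have "aff_ext m m B (the_inv_into B \<psi> \<circ> \<psi>0)"
      by (rule aff_ext_comp[OF ext0 extinv\<psi>]) (use bij0 in \<open>simp add: bij_betw_def\<close>)
    moreover have "\<forall>x\<in>B. (the_inv_into B \<psi> \<circ> \<psi>0) x = the_inv_into B (\<Phi> \<psi>) x"
    proof
      fix x assume x: "x \<in> B"
      define y where "y = the_inv_into B \<psi> (\<psi>0 x)"
      have \<psi>0x: "\<psi>0 x \<in> B'" using bij0 x by (auto simp: bij_betw_def)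
      have yB: "y \<in> B" unfolding y_def using bij\<psi> \<psi>0x
        by (metis bij_betw_def bij_betw_the_inv_into bij_betwE)
      have \<psi>y: "\<psi> y = \<psi>0 x" unfolding y_def using bij\<psi> \<psi>0x
        by (simp add: bij_betw_def f_the_inv_into_f)
      have "\<Phi> \<psi> y = x" using yB \<psi>y x bij0 by (simp add: \<Phi>_def inv0_def bij_betw_def the_inv_into_f_f)
      then have "the_inv_into B (\<Phi> \<psi>) x = y"
        by (intro the_inv_into_f_eq) (use bij\<Phi> yB in \<open>auto simp: bij_betw_def\<close>)
      then show "(the_inv_into B \<psi> \<circ> \<psi>0) x = the_inv_into B (\<Phi> \<psi>) x" by (simp add: y_def)
    qed
    ultimately have e2: "aff_ext m m B (the_inv_into B (\<Phi> \<psi>))" by (rule aff_ext_cong)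
    show ?thesis using bij\<Phi> e1 e2 by (simp add: Aut_aff_def aff_iso_def \<Phi>_def)
  qed
  have inj: "inj_on \<Phi> {\<psi> \<in> extensional B. aff_iso m n B B' \<psi>}"
  proof (rule inj_onI)
    fix \<psi>1 \<psi>2 assume h1: "\<psi>1 \<in> {\<psi> \<in> extensional B. aff_iso m n B B' \<psi>}"
      and h2: "\<psi>2 \<in> {\<psi> \<in> extensional B. aff_iso m n B B' \<psi>}" and eq: "\<Phi> \<psi>1 = \<Phi> \<psi>2"
    have b1: "bij_betw \<psi>1 B B'" and b2: "bij_betw \<psi>2 B B'" using h1 h2 by (auto simp: aff_iso_def)
    have injinv: "inj_on inv0 B'" using binv0 by (simp add: bij_betw_def)
    show "\<psi>1 = \<psi>2"
    proof (rule extensionalityI)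
      show "\<psi>1 \<in> extensional B" "\<psi>2 \<in> extensional B" using h1 h2 by auto
      fix x assume x: "x \<in> B"
      have "inv0 (\<psi>1 x) = inv0 (\<psi>2 x)" using fun_cong[OF eq, of x] x by (simp add: \<Phi>_def)
      moreover have "\<psi>1 x \<in> B'" "\<psi>2 x \<in> B'" using b1 b2 x by (auto simp: bij_betw_def)
      ultimately show "\<psi>1 x = \<psi>2 x" using injinv by (auto dest: inj_onD)
    qed
  qed
  show ?thesis
    by (rule card_inj_on_le[OF inj _ Aut_finite[OF finB]]) (use inAut in blast)
qed


lemma main_count:
  fixes B :: "(nat \<Rightarrow> 'a::{finite,field}) set" and A :: "(nat \<Rightarrow> 'a) set"
  assumes B: "B \<subseteq> vecs m" and A: "A \<subseteq> vecs n" "A \<noteq> {}" and r1: "rank_aff B \<ge> 1"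
  shows "hom_aff m n B A < card {B'. B' \<subseteq> A \<and> aff_isomorphic m n B B'} * card (Aut_aff m B)
           + card (UNIV :: 'a set) ^ (rank_aff B - 1) * card A ^ (rank_aff B - 1)"
proof -
  define r where "r = rank_aff B"
  have finB: "finite B" using B finite_vecs finite_subset by blast
  have finA: "finite A" using A finite_vecs finite_subset by blast
  define R where "R = {card S | S. S \<subseteq> B \<and> aff_indep S}"
  have finR: "finite R"
  proof (rule finite_subset)
    show "R \<subseteq> card ` Pow B" unfolding R_def by blast
    show "finite (card ` Pow B)" using finB by simp
  qed
  have "aff_indep ({} :: (nat \<Rightarrow> 'a) set)" by (simp add: aff_indep_def)
  then have "card ({} :: (nat \<Rightarrow> 'a) set) \<in> R" unfolding R_def by blast
  then have "Max R \<in> R" using finR Max_in by blast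
  then obtain S where S: "S \<subseteq> B" "aff_indep S" "card S = r"
    unfolding R_def r_def rank_aff_def by auto
  have mx: "\<forall>T. T \<subseteq> B \<and> aff_indep T \<longrightarrow> card T \<le> card S"
  proof (intro allI impI)
    fix T assume "T \<subseteq> B \<and> aff_indep T"
    then have "card T \<in> R" unfolding R_def by blast
    then show "card T \<le> card S" using finR S(3) unfolding r_def rank_aff_def R_def[symmetric] by simp
  qed
  have finS: "finite S" using finB S(1) finite_subset by blast
  obtain e where e: "bij_betw e {..<r} S"
    using ex_bij_betw_nat_finite[OF finS] S(3) by (auto simp: atLeast0LessThan)
  have eB: "e k \<in> B" if "k < r" for k using e S(1) that by (auto simp: bij_betw_def)
  have evec: "\<forall>k\<in>{..<r}. e k \<in> vecs m" using eB B by auto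
  have coef: "\<exists>\<mu>. sum \<mu> {..<r} = 1 \<and> b = (\<lambda>j. \<Sum>k<r. \<mu> k * e k j)" if b: "b \<in> B" for b
  proof -
    obtain lam where l1: "sum lam S = 1" and l2: "b = (\<lambda>j. \<Sum>s\<in>S. lam s * s j)"
      using span_lemma[OF finB S(1,2) mx b] by blast
    have "sum (\<lambda>k. lam (e k)) {..<r} = 1" using l1 sum.reindex_bij_betw[OF e, of lam] by simp
    moreover have "b = (\<lambda>j. \<Sum>k<r. lam (e k) * e k j)"
      using l2 sum.reindex_bij_betw[OF e, of "\<lambda>s. lam s * s j" for j] by simp
    ultimately show ?thesis by blast
  qed
  define H where "H = {g \<in> B \<rightarrow>\<^sub>E A. aff_ext m n B g}"
  define tup where "tup g = restrict (\<lambda>k. g (e k)) {..<r}" for g :: "(nat \<Rightarrow> 'a) \<Rightarrow> (nat \<Rightarrow> 'a)"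
  define good where "good t \<longleftrightarrow> inj_on t {..<r} \<and> aff_indep (t ` {..<r})" for t :: "nat \<Rightarrow> (nat \<Rightarrow> 'a)"
  have finH: "finite H"
  proof (rule finite_subset)
    show "H \<subseteq> B \<rightarrow>\<^sub>E A" unfolding H_def by blast
    show "finite (B \<rightarrow>\<^sub>E A)" using finB finA by (intro finite_PiE) simp_all
  qed
  have hom_rep: "g b = (\<lambda>j. \<Sum>k<r. \<mu> k * tup g k j)"
    if g: "g \<in> H" and b: "b \<in> B" and \<mu>: "sum \<mu> {..<r} = 1" "b = (\<lambda>j. \<Sum>k<r. \<mu> k * e k j)" for g b \<mu>
  proof -
    obtain F where F: "affine_map m n F" "\<forall>x\<in>B. g x = F x" using g unfolding H_def aff_ext_def by blast
    have "g b = F b" using F b by simp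
    also have "\<dots> = (\<lambda>j. \<Sum>k<r. \<mu> k * F (e k) j)"
      by (subst \<mu>(2), rule affine_comb[OF F(1) evec \<mu>(1)])
    also have "\<dots> = (\<lambda>j. \<Sum>k<r. \<mu> k * tup g k j)"
      using F(2) eB by (intro ext sum.cong refl) (simp add: tup_def)
    finally show ?thesis .
  qed
  have inj_tup: "inj_on tup H"
  proof (rule inj_onI)
    fix g1 g2 assume g1: "g1 \<in> H" and g2: "g2 \<in> H" and eq: "tup g1 = tup g2"
    show "g1 = g2"
    proof (rule extensionalityI)
      show "g1 \<in> extensional B" "g2 \<in> extensional B" using g1 g2 by (auto simp: H_def PiE_iff)
      fix b assume b: "b \<in> B"
      obtain \<mu> where \<mu>: "sum \<mu> {..<r} = 1" "b = (\<lambda>j. \<Sum>k<r. \<mu> k * e k j)" using coef[OF b] by blast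
      show "g1 b = g2 b" using hom_rep[OF g1 b \<mu>] hom_rep[OF g2 b \<mu>] eq by simp
    qed
  qed
  have tupA: "tup g \<in> {..<r} \<rightarrow>\<^sub>E A" if "g \<in> H" for g
    using that eB by (auto simp: H_def tup_def PiE_iff)
  define Hg where "Hg = {g \<in> H. good (tup g)}"
  define Hb where "Hb = {g \<in> H. \<not> good (tup g)}"
  have HU: "H = Hg \<union> Hb" and disj: "Hg \<inter> Hb = {}" by (auto simp: Hg_def Hb_def)
  have finHg: "finite Hg" and finHb: "finite Hb" using finH by (auto simp: Hg_def Hb_def)
  define Bad where "Bad = {t \<in> {..<r} \<rightarrow>\<^sub>E A. \<not> (inj_on t {..<r} \<and> aff_indep (t ` {..<r}))}"
  have finBad: "finite Bad"
  proof (rule finite_subset)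
    show "Bad \<subseteq> {..<r} \<rightarrow>\<^sub>E A" unfolding Bad_def by blast
    show "finite ({..<r} \<rightarrow>\<^sub>E A)" using finA by (intro finite_PiE) simp_all
  qed
  have "card Hb \<le> card Bad"
  proof (rule card_inj_on_le[OF _ _ finBad])
    show "inj_on tup Hb" using inj_tup by (rule inj_on_subset) (auto simp: Hb_def)
    show "tup ` Hb \<subseteq> Bad" using tupA by (auto simp: Hb_def Bad_def good_def)
  qed
  also have "card Bad < card (UNIV :: 'a set) ^ (r - 1) * card A ^ (r - 1)"
    unfolding Bad_def by (rule bad_count[OF finA A(2)]) (use r1 in \<open>simp add: r_def\<close>)
  finally have cHb: "card Hb < card (UNIV :: 'a set) ^ (r - 1) * card A ^ (r - 1)" .
  define Cop where "Cop = {B'. B' \<subseteq> A \<and> aff_isomorphic m n B B'}"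
  define Iso where "Iso B' = {\<psi> \<in> extensional B. aff_iso m n B B' \<psi>}" for B'
  have iso: "aff_iso m n B (g ` B) g" if g: "g \<in> Hg" for g
  proof -
    let ?t = "tup g"
    have gH: "g \<in> H" and gd: "good ?t" using g by (auto simp: Hg_def)
    have tinj: "inj_on ?t {..<r}" and tind: "aff_indep (?t ` {..<r})" using gd by (auto simp: good_def)
    have tvec: "\<forall>k\<in>{..<r}. ?t k \<in> vecs n" using tupA[OF gH] A(1) by (auto simp: PiE_iff)
    have injg: "inj_on g B"
    proof (rule inj_onI)
      fix b1 b2 assume b1: "b1 \<in> B" and b2: "b2 \<in> B" and eq: "g b1 = g b2"
      obtain \<mu>1 where m1: "sum \<mu>1 {..<r} = 1" "b1 = (\<lambda>j. \<Sum>k<r. \<mu>1 k * e k j)" using coef[OF b1] by blast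
      obtain \<mu>2 where m2: "sum \<mu>2 {..<r} = 1" "b2 = (\<lambda>j. \<Sum>k<r. \<mu>2 k * e k j)" using coef[OF b2] by blast
      have r1': "g b1 = (\<lambda>j. \<Sum>k<r. \<mu>1 k * ?t k j)" by (rule hom_rep[OF gH b1 m1])
      have r2': "g b2 = (\<lambda>j. \<Sum>k<r. \<mu>2 k * ?t k j)" by (rule hom_rep[OF gH b2 m2])
      have "sum (\<lambda>k. \<mu>1 k - \<mu>2 k) {..<r} = 0" using m1(1) m2(1) by (simp add: sum_subtractf)
      moreover have "\<forall>i. (\<Sum>k<r. (\<mu>1 k - \<mu>2 k) * ?t k i) = 0"
      proof
        fix i
        have "(\<Sum>k<r. (\<mu>1 k - \<mu>2 k) * ?t k i) = g b1 i - g b2 i"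
          unfolding r1' r2' by (simp add: sum_subtractf left_diff_distrib)
        then show "(\<Sum>k<r. (\<mu>1 k - \<mu>2 k) * ?t k i) = 0" using eq by simp
      qed
      ultimately have "\<forall>k\<in>{..<r}. \<mu>1 k - \<mu>2 k = 0" by (rule aff_indep_tuple[OF tinj tind])
      then have "\<forall>k\<in>{..<r}. \<mu>1 k = \<mu>2 k" by simp
      then show "b1 = b2" unfolding m1(2) m2(2) by (intro ext sum.cong refl) simp
    qed
    have "aff_ext n m (g ` B) (the_inv_into B g)"
    proof -
      define \<phi> where "\<phi> y = e (the_inv_into {..<r} ?t y)" for y
      have \<phi>t: "\<phi> (?t k) = e k" if "k < r" for k using tinj that by (simp add: \<phi>_def the_inv_into_f_f)
      have "\<forall>p\<in>?t ` {..<r}. \<phi> p \<in> vecs m" using \<phi>t evec by auto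
      then obtain h where h: "affine_map n m h" "\<forall>p\<in>?t ` {..<r}. h p = \<phi> p"
        using aff_extend[of "?t ` {..<r}" n \<phi> m] tvec tind by blast
      have "\<forall>y\<in>g ` B. the_inv_into B g y = h y"
      proof
        fix y assume "y \<in> g ` B"
        then obtain b where b: "b \<in> B" and y: "y = g b" by blast
        obtain \<mu> where \<mu>: "sum \<mu> {..<r} = 1" "b = (\<lambda>j. \<Sum>k<r. \<mu> k * e k j)" using coef[OF b] by blast
        have "h y = h (\<lambda>j. \<Sum>k<r. \<mu> k * ?t k j)" using hom_rep[OF gH b \<mu>] y by simp
        also have "\<dots> = (\<lambda>j. \<Sum>k<r. \<mu> k * h (?t k) j)" by (rule affine_comb[OF h(1) tvec \<mu>(1)])
        also have "\<dots> = (\<lambda>j. \<Sum>k<r. \<mu> k * e k j)"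
          using h(2) \<phi>t by (intro ext sum.cong refl) simp
        also have "\<dots> = b" using \<mu>(2) by simp
        finally show "the_inv_into B g y = h y" using y b injg by (simp add: the_inv_into_f_f)
      qed
      then show ?thesis using h(1) unfolding aff_ext_def by blast
    qed
    moreover have "aff_ext m n B g" using gH by (simp add: H_def)
    ultimately show ?thesis using injg by (simp add: aff_iso_def bij_betw_def)
  qed
  have finCop: "finite Cop"
  proof (rule finite_subset)
    show "Cop \<subseteq> Pow A" unfolding Cop_def by blast
    show "finite (Pow A)" using finA by simp
  qed
  have subU: "Hg \<subseteq> (\<Union>B'\<in>Cop. Iso B')"
  proof
    fix g assume g: "g \<in> Hg"
    have gA: "g ` B \<subseteq> A" and gext: "g \<in> extensional B" using g by (auto simp: Hg_def H_def PiE_iff)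
    have "g ` B \<in> Cop" using gA iso[OF g] by (auto simp: Cop_def aff_isomorphic_def)
    moreover have "g \<in> Iso (g ` B)" using gext iso[OF g] by (simp add: Iso_def)
    ultimately show "g \<in> (\<Union>B'\<in>Cop. Iso B')" by blast
  qed
  have finU: "finite (\<Union>B'\<in>Cop. Iso B')"
  proof (rule finite_subset)
    show "(\<Union>B'\<in>Cop. Iso B') \<subseteq> B \<rightarrow>\<^sub>E A"
      by (auto simp: Cop_def Iso_def aff_iso_def bij_betw_def PiE_iff extensional_def)
    show "finite (B \<rightarrow>\<^sub>E A)" using finB finA by (intro finite_PiE) simp_all
  qed
  have "card Hg \<le> card (\<Union>B'\<in>Cop. Iso B')" by (rule card_mono[OF finU subU])
  also have "\<dots> \<le> (\<Sum>B'\<in>Cop. card (Iso B'))" by (rule card_UN_le[OF finCop])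
  also have "\<dots> \<le> (\<Sum>B'\<in>Cop. card (Aut_aff m B))"
  proof (rule sum_mono)
    fix B' assume "B' \<in> Cop"
    then obtain \<psi>0 where "aff_iso m n B B' \<psi>0" by (auto simp: Cop_def aff_isomorphic_def)
    then show "card (Iso B') \<le> card (Aut_aff m B)" unfolding Iso_def by (rule iso_le_aut[OF finB])
  qed
  also have "\<dots> = card Cop * card (Aut_aff m B)" by simp
  finally have cHg: "card Hg \<le> card Cop * card (Aut_aff m B)" .
  have "hom_aff m n B A = card H" by (simp add: hom_aff_def H_def)
  also have "\<dots> = card Hg + card Hb" unfolding HU by (rule card_Un_disjoint[OF finHg finHb disj])
  finally show ?thesis using cHg cHb unfolding Cop_def r_def by linarith
qed

lemma lnX:
  fixes q a C :: real
  assumes q: "1 < q" and a: "0 < a"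
  shows "ln ((a / q ^ n) powr C * (q ^ n) ^ r) = C * (ln a - real n * ln q) + real r * (real n * ln q)"
proof -
  have qn: "0 < q ^ n" using q by simp
  have "ln ((a / q ^ n) powr C * (q ^ n) ^ r) = ln ((a / q ^ n) powr C) + ln ((q ^ n) ^ r)"
    using a qn q by (subst ln_mult) auto
  also have "\<dots> = C * (ln a - real n * ln q) + real r * (real n * ln q)"
    using a qn q by (simp add: ln_powr ln_div ln_realpow)
  finally show ?thesis .
qed

lemma R1:
  fixes q a C :: real and n r :: nat
  assumes q: "1 < q" and a: "0 < a" and r: "1 \<le> r" and C: "real r \<le> C"
    and lt: "(a / q ^ n) powr C * (q ^ n) ^ r < q ^ (r - 1) * a ^ (r - 1)"
  shows "a < q powr (real n - (real n - real r + 1) / (C - real r + 1))"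
proof -
  define k where "k = C - real r + 1"
  have k: "k > 0" using C by (simp add: k_def)
  have lq: "ln q > 0" using q by simp
  have pos: "0 < (a / q ^ n) powr C * (q ^ n) ^ r" using a q by simp
  have "ln ((a / q ^ n) powr C * (q ^ n) ^ r) < ln (q ^ (r - 1) * a ^ (r - 1))"
    using lt pos by (subst ln_less_cancel_iff) auto
  also have "ln (q ^ (r - 1) * a ^ (r - 1)) = (real r - 1) * ln q + (real r - 1) * ln a"
    using q a r by (simp add: ln_mult ln_realpow of_nat_diff)
  finally have ineq: "C * (ln a - real n * ln q) + real r * (real n * ln q) < (real r - 1) * ln q + (real r - 1) * ln a"
    using lnX[OF q a] by simp
  have "k * ln a - (real n * (C - real r) + (real r - 1)) * ln q
      = (C * (ln a - real n * ln q) + real r * (real n * ln q)) - ((real r - 1) * ln q + (real r - 1) * ln a)"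
    by (simp add: k_def algebra_simps)
  then have "k * ln a < (real n * (C - real r) + (real r - 1)) * ln q" using ineq by linarith
  then have "ln a < (real n * (C - real r) + (real r - 1)) / k * ln q"
    using k by (simp add: field_simps)
  moreover have "(real n * (C - real r) + (real r - 1)) / k = real n - (real n - real r + 1) / k"
    using k by (simp add: field_simps k_def)
  ultimately have "ln a < (real n - (real n - real r + 1) / k) * ln q" by simp
  then have "exp (ln a) < exp ((real n - (real n - real r + 1) / k) * ln q)" by simp
  then show ?thesis using a q by (simp add: k_def powr_def)
qed

lemma R2:
  fixes q a C D :: real and n r :: nat
  assumes q: "1 < q" and D: "0 < D" and C: "real r \<le> C" and r: "1 \<le> r"
    and aD: "a = D * q powr ((1 - 1 / (C - real r + 1)) * real n)"
  shows "q ^ (r - 1) * a ^ (r - 1) = q ^ (r - 1) / D powr (C - real r + 1) * ((a / q ^ n) powr C * (q ^ n) ^ r)"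
proof -
  define k where "k = C - real r + 1"
  have k: "k > 0" using C by (simp add: k_def)
  have a: "0 < a" using aD D q by simp
  have la: "ln a = ln D + (1 - 1 / k) * real n * ln q"
    using aD D q by (simp add: ln_mult ln_powr k_def)
  have "ln (a ^ (r - 1) * D powr k) = ln ((a / q ^ n) powr C * (q ^ n) ^ r)"
  proof -
    have "ln (a ^ (r - 1) * D powr k) = real (r - 1) * ln a + k * ln D"
      using a D by (simp add: ln_mult ln_realpow ln_powr)
    also have "\<dots> = C * (ln a - real n * ln q) + real r * (real n * ln q)"
    proof -
      have "real (r - 1) = real r - 1" using r by (simp add: of_nat_diff)
      then show ?thesis using la k unfolding k_def by (simp add: field_simps)
    qed
    also have "\<dots> = ln ((a / q ^ n) powr C * (q ^ n) ^ r)" using lnX[OF q a] by simp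
    finally show ?thesis .
  qed
  then have eq: "a ^ (r - 1) * D powr k = (a / q ^ n) powr C * (q ^ n) ^ r"
    using a D q by (subst (asm) ln_inj_iff) auto
  show ?thesis using D unfolding eq[symmetric] k_def by (simp add: field_simps)
qed

lemma C_ge:
  fixes B :: "(nat \<Rightarrow> 'a::{finite,field}) set"
  assumes B: "B \<subseteq> vecs m" and ws: "weakly_sidorenko C m B"
  shows "real (rank_aff B) \<le> C"
proof -
  let ?A = "{(\<lambda>i. 0)} :: (nat \<Rightarrow> 'a) set"
  let ?q = "real (card (UNIV :: 'a set))"
  have q1: "1 < ?q" using card_UNIV_ge2[where 'a='a] by linarith
  have finB: "finite B" using B finite_vecs finite_subset by blast
  have A: "?A \<subseteq> vecs 1" by (simp add: vecs_def)
  have "hom_aff m 1 B ?A \<le> card (B \<rightarrow>\<^sub>E ?A)" unfolding hom_aff_def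
    by (rule card_mono) (use finB in \<open>auto intro: finite_PiE\<close>)
  also have "card (B \<rightarrow>\<^sub>E ?A) = 1" using finB by (simp add: card_PiE)
  finally have h1: "real (hom_aff m 1 B ?A) \<le> 1" by simp
  have "(real (card ?A) / ?q ^ 1) powr C * (?q ^ 1) ^ rank_aff B \<le> real (hom_aff m 1 B ?A)"
    using ws A unfolding weakly_sidorenko_def by blast
  moreover have "(real (card ?A) / ?q ^ 1) powr C * (?q ^ 1) ^ rank_aff B = ?q powr (real (rank_aff B) - C)"
    using q1 by (simp add: powr_divide powr_diff powr_realpow[symmetric])
  ultimately have le1: "?q powr (real (rank_aff B) - C) \<le> 1" using h1 by simp
  show ?thesis
  proof (rule ccontr)
    assume "\<not> real (rank_aff B) \<le> C"
    then have "0 < real (rank_aff B) - C" by simp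
    then have "?q powr 0 < ?q powr (real (rank_aff B) - C)" by (rule iffD2[OF powr_less_cancel_iff[OF q1]])
    then show False using le1 q1 by simp
  qed
qed

theorem lemma3p2:
  fixes B :: "(nat \<Rightarrow> 'a::{finite,field}) set" and m :: nat and C :: real
  assumes "B \<subseteq> vecs m"
    and "weakly_sidorenko C m B"
    and "rank_aff B \<ge> 1"
  shows "(\<forall>n. real (ex_aff m n B) <
            real (card (UNIV :: 'a set)) powr (real n - (real n - real (rank_aff B) + 1) / (C - real (rank_aff B) + 1)))
    \<and> (\<forall>n (A :: (nat \<Rightarrow> 'a) set) D. A \<subseteq> vecs n \<and> D > 0 \<and>
          real (card A) = D * real (card (UNIV :: 'a set)) powr ((1 - 1 / (C - real (rank_aff B) + 1)) * real n) \<longrightarrow>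
          real (card {B'. B' \<subseteq> A \<and> aff_isomorphic m n B B'}) >
            (1 - real (card (UNIV :: 'a set)) ^ (rank_aff B - 1) / D powr (C - real (rank_aff B) + 1)) *
            ((real (card A) / real (card (UNIV :: 'a set)) ^ n) powr C * (real (card (UNIV :: 'a set)) ^ n) ^ rank_aff B
              / real (card (Aut_aff m B))))"
proof -
  note B = assms(1) and ws = assms(2) and r1 = assms(3)
  let ?q = "real (card (UNIV :: 'a set))"
  let ?r = "rank_aff B"
  have q1: "1 < ?q" using card_UNIV_ge2[where 'a='a] by linarith
  have Cge: "real ?r \<le> C" by (rule C_ge[OF B ws])
  have finB: "finite B" using B finite_vecs finite_subset by blast
  have Bne: "B \<noteq> {}"
  proof
    assume "B = {}"
    then have "{card S | S. S \<subseteq> B \<and> aff_indep S} = {0}" by (auto simp: aff_indep_def)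
    then have "?r = 0" by (simp add: rank_aff_def)
    then show False using r1 by simp
  qed
  have key: "(real (card A) / ?q ^ n) powr C * (?q ^ n) ^ ?r
      < real (card {B'. B' \<subseteq> A \<and> aff_isomorphic m n B B'}) * real (card (Aut_aff m B)) + ?q ^ (?r - 1) * real (card A) ^ (?r - 1)"
    if A: "A \<subseteq> vecs n" "A \<noteq> {}" for n and A :: "(nat \<Rightarrow> 'a) set"
  proof -
    have "(real (card A) / ?q ^ n) powr C * (?q ^ n) ^ ?r \<le> real (hom_aff m n B A)"
      using ws A(1) unfolding weakly_sidorenko_def by blast
    also have "real (hom_aff m n B A) < real (card {B'. B' \<subseteq> A \<and> aff_isomorphic m n B B'} * card (Aut_aff m B)
           + card (UNIV :: 'a set) ^ (?r - 1) * card A ^ (?r - 1))"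
      using main_count[OF B A r1] by linarith
    finally show ?thesis by simp
  qed
  have part1: "real (ex_aff m n B) < ?q powr (real n - (real n - real ?r + 1) / (C - real ?r + 1))" for n
  proof -
    define SS where "SS = {card A | A. A \<subseteq> (vecs n :: (nat \<Rightarrow> 'a) set) \<and> \<not> contains_aff_copy m n B A}"
    have finSS: "finite SS"
    proof (rule finite_subset)
      show "SS \<subseteq> card ` Pow (vecs n :: (nat \<Rightarrow> 'a) set)" unfolding SS_def by blast
      show "finite (card ` Pow (vecs n :: (nat \<Rightarrow> 'a) set))" using finite_vecs[where 'a='a] by simp
    qed
    have "\<not> contains_aff_copy m n B ({} :: (nat \<Rightarrow> 'a) set)"
      using Bne by (auto simp: contains_aff_copy_def aff_isomorphic_def aff_iso_def bij_betw_def)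
    then have "card ({} :: (nat \<Rightarrow> 'a) set) \<in> SS" unfolding SS_def by blast
    then have "Max SS \<in> SS" using finSS Max_in by blast
    then obtain A where A: "A \<subseteq> vecs n" "\<not> contains_aff_copy m n B A" and cA: "card A = ex_aff m n B"
      unfolding SS_def ex_aff_def by auto
    show ?thesis
    proof (cases "A = {}")
      case True
      then show ?thesis using cA q1 by simp
    next
      case False
      have finA: "finite A" using A(1) finite_vecs finite_subset by blast
      have e0: "{B'. B' \<subseteq> A \<and> aff_isomorphic m n B B'} = {}" using A(2) by (auto simp: contains_aff_copy_def)
      have lt: "(real (card A) / ?q ^ n) powr C * (?q ^ n) ^ ?r < ?q ^ (?r - 1) * real (card A) ^ (?r - 1)"
        using key[OF A(1) False] unfolding e0 by simp
      have "0 < real (card A)" using False finA by (simp add: card_gt_0_iff)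
      from R1[OF q1 this r1 Cge lt] show ?thesis using cA by simp
    qed
  qed
  have part2: "real (card {B'. B' \<subseteq> A \<and> aff_isomorphic m n B B'}) >
            (1 - ?q ^ (?r - 1) / D powr (C - real ?r + 1)) *
            ((real (card A) / ?q ^ n) powr C * (?q ^ n) ^ ?r / real (card (Aut_aff m B)))"
    if A: "A \<subseteq> vecs n" and D: "D > 0" and cA: "real (card A) = D * ?q powr ((1 - 1 / (C - real ?r + 1)) * real n)"
    for n A D
  proof -
    have "0 < real (card A)" using cA D q1 by simp
    then have Ane: "A \<noteq> {}" by auto
    define X where "X = (real (card A) / ?q ^ n) powr C * (?q ^ n) ^ ?r"
    define cop where "cop = real (card {B'. B' \<subseteq> A \<and> aff_isomorphic m n B B'})"
    define aut where "aut = real (card (Aut_aff m B))"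
    have aut1: "1 \<le> aut" unfolding aut_def using Aut_pos[OF B finB] by simp
    have lt: "X < cop * aut + ?q ^ (?r - 1) * real (card A) ^ (?r - 1)"
      using key[OF A Ane] unfolding X_def cop_def aut_def .
    have id: "?q ^ (?r - 1) * real (card A) ^ (?r - 1) = ?q ^ (?r - 1) / D powr (C - real ?r + 1) * X"
      unfolding X_def by (rule R2[OF q1 D Cge r1 cA])
    have "(1 - ?q ^ (?r - 1) / D powr (C - real ?r + 1)) * (X / aut) = (X - ?q ^ (?r - 1) * real (card A) ^ (?r - 1)) / aut"
      unfolding id by (simp add: field_simps)
    also have "\<dots> < (cop * aut) / aut" using lt aut1 by (intro divide_strict_right_mono) linarith+
    also have "\<dots> = cop" using aut1 by simp
    finally show ?thesis unfolding X_def cop_def aut_def .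
  qed
  show ?thesis using part1 part2 by blast
qed

end
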